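(* If a finite graph $G$ has a loop, then $H^i(G)=0$ for all $i$.
   Context: Graphs are finite; loops and multiple edges allowed. For $G=(V,E)$ and $s\subseteq E$, $[G:s]$ is the spanning subgraph with edge set $s$. With $1*1=1$, $1*x=x*1=x$, $x*x=0$: an enhanced state is $S=(s,c)$, $s\subseteq E$, $c$ assigning $1$ or $x$ to each component of $[G:s]$; $i(S)=|s|$, $j(S)=$ number of components colored $x$. $C^{i,j}(G)$ is free abelian on enhanced states with $i(S)=i,j(S)=j$; $C^i(G)=\bigoplus_jC^{i,j}(G)$. For an ordering of the edges, $d(S)=\sum_{e\in E\setminus s}(-1)^{n(e)}S_e$, $n(e)$ the number of edges of $s$ ordered before $e$; $S_e=(s\cup\{e\},c_e)$ where, if $e$ joins a component to itself, colors are unchanged, and if $e$ joins distinct components $E_1,E_2$ the merged component gets $c(E_1)*c(E_2)$ (and $S_e=0$ if this product is $0$). $H^i(G)$ is the $i$-th cohomology of $(C^\bullet(G),d)$. *)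

theory Defs
  imports Main
begin

text \<open>A finite graph (loops and multiple edges allowed) is given by a finite vertex set V,
a finite edge set E and an endpoint map ends; an edge e joins fst (ends e) and snd (ends e).  The edge ordering is given by a
function r injective on E (e' before e iff r e' < r e).\<close>

definition graph :: "'v set \<Rightarrow> 'e set \<Rightarrow> ('e \<Rightarrow> 'v \<times> 'v) \<Rightarrow> bool" where
  "graph V E ends \<longleftrightarrow> finite V \<and> finite E \<and> (\<forall>e\<in>E. fst (ends e) \<in> V \<and> snd (ends e) \<in> V)"

definition has_loop :: "'e set \<Rightarrow> ('e \<Rightarrow> 'v \<times> 'v) \<Rightarrow> bool" where
  "has_loop E ends \<longleftrightarrow> (\<exists>e\<in>E. fst (ends e) = snd (ends e))"

definition conn :: "('e \<Rightarrow> 'v \<times> 'v) \<Rightarrow> 'e set \<Rightarrow> ('v \<times> 'v) set" where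
  "conn ends s = ((ends ` s) \<union> (ends ` s)\<inverse>)\<^sup>*"

definition comps :: "'v set \<Rightarrow> ('e \<Rightarrow> 'v \<times> 'v) \<Rightarrow> 'e set \<Rightarrow> 'v set set" where
  "comps V ends s = V // conn ends s"

text \<open>Enhanced state: (s, c); colour True = x, False = 1; c is False off the components.\<close>

type_synonym ('e, 'v) state = "'e set \<times> ('v set \<Rightarrow> bool)"

definition valid_state :: "'v set \<Rightarrow> 'e set \<Rightarrow> ('e \<Rightarrow> 'v \<times> 'v) \<Rightarrow> ('e, 'v) state \<Rightarrow> bool" where
  "valid_state V E ends S \<longleftrightarrow> fst S \<subseteq> E \<and> (\<forall>K. K \<notin> comps V ends (fst S) \<longrightarrow> snd S K = False)"

text \<open>S_e (None represents 0).\<close>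

definition add_edge :: "('e \<Rightarrow> 'v \<times> 'v) \<Rightarrow> ('e, 'v) state \<Rightarrow> 'e \<Rightarrow> ('e, 'v) state option" where
  "add_edge ends S e =
    (let s = fst S; c = snd S;
         K1 = conn ends s `` {fst (ends e)}; K2 = conn ends s `` {snd (ends e)}
     in if K1 = K2 then Some (insert e s, c)
        else if c K1 \<and> c K2 then None
        else Some (insert e s, c(K1 := False, K2 := False, K1 \<union> K2 := (c K1 \<or> c K2))))"

definition sgn_exp :: "('e \<Rightarrow> nat) \<Rightarrow> 'e set \<Rightarrow> 'e \<Rightarrow> int" where
  "sgn_exp r s e = (-1) ^ card {e' \<in> s. r e' < r e}"

definition dcoef :: "'e set \<Rightarrow> ('e \<Rightarrow> 'v \<times> 'v) \<Rightarrow> ('e \<Rightarrow> nat) \<Rightarrow> ('e, 'v) state \<Rightarrow> ('e, 'v) state \<Rightarrow> int" where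
  "dcoef E ends r S T = (\<Sum>e \<in> E - fst S. if add_edge ends S e = Some T then sgn_exp r (fst S) e else 0)"

definition cochains :: "'v set \<Rightarrow> 'e set \<Rightarrow> ('e \<Rightarrow> 'v \<times> 'v) \<Rightarrow> int \<Rightarrow> (('e, 'v) state \<Rightarrow> int) set" where
  "cochains V E ends i = {f. \<forall>S. f S \<noteq> 0 \<longrightarrow> valid_state V E ends S \<and> int (card (fst S)) = i}"

definition differential :: "'v set \<Rightarrow> 'e set \<Rightarrow> ('e \<Rightarrow> 'v \<times> 'v) \<Rightarrow> ('e \<Rightarrow> nat)
    \<Rightarrow> (('e, 'v) state \<Rightarrow> int) \<Rightarrow> (('e, 'v) state \<Rightarrow> int)" where
  "differential V E ends r f = (\<lambda>T. \<Sum>S \<in> {S. valid_state V E ends S}. f S * dcoef E ends r S T)"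

text \<open>H^i(G) = 0: every i-cocycle is a coboundary (C^{-1} = 0 automatically).\<close>

definition cohomology_vanishes :: "'v set \<Rightarrow> 'e set \<Rightarrow> ('e \<Rightarrow> 'v \<times> 'v) \<Rightarrow> ('e \<Rightarrow> nat) \<Rightarrow> int \<Rightarrow> bool" where
  "cohomology_vanishes V E ends r i \<longleftrightarrow>
     (\<forall>f \<in> cochains V E ends i. differential V E ends r f = (\<lambda>_. 0) \<longrightarrow>
        (\<exists>g \<in> cochains V E ends (i - 1). differential V E ends r g = f))"

end

theory Submission
  imports Defs
begin

lemma conn_loop:
  assumes "fst (ends l) = snd (ends l)"
  shows "conn ends (insert l s) = conn ends s"
proof -
  obtain v where v: "ends l = (v, v)" using assms by (metis prod.collapse)
  have "ends ` insert l s \<union> (ends ` insert l s)\<inverse> = insert (v,v) (ends ` s \<union> (ends ` s)\<inverse>)"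
    using v by auto
  then show ?thesis unfolding conn_def by (auto simp: rtrancl_insert)
qed

lemma add_edge_loop:
  assumes "fst (ends l) = snd (ends l)"
  shows "add_edge ends (s, c) l = Some (insert l s, c)"
  using assms unfolding add_edge_def Let_def by simp

lemma add_edge_fst:
  "add_edge ends S e = Some T \<Longrightarrow> fst T = insert e (fst S)"
  unfolding add_edge_def Let_def by (auto split: if_splits)

lemma add_edge_phi:
  assumes "fst (ends l) = snd (ends l)"
  shows "add_edge ends (insert l s, c) e = map_option (\<lambda>X. (insert l (fst X), snd X)) (add_edge ends (s, c) e)"
  using assms unfolding add_edge_def Let_def by (simp add: conn_loop insert_commute)

lemma valid_phi:
  assumes "fst (ends l) = snd (ends l)" "l \<in> E"
  shows "valid_state V E ends (insert l s, c) \<longleftrightarrow> valid_state V E ends (s, c)"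
  using assms unfolding valid_state_def comps_def by (auto simp: conn_loop)

lemma sgn_insert:
  assumes "finite s" "x \<notin> s"
  shows "sgn_exp r (insert x s) e = (if r x < r e then -1 else 1) * sgn_exp r s e"
proof -
  have "{e' \<in> insert x s. r e' < r e} = (if r x < r e then insert x {e' \<in> s. r e' < r e} else {e' \<in> s. r e' < r e})"
    by auto
  then show ?thesis using assms unfolding sgn_exp_def by auto
qed

lemma sgn_sq: "sgn_exp r s e * sgn_exp r s e = 1"
  unfolding sgn_exp_def by (simp add: power_mult_distrib[symmetric] flip: power_add) 

lemma finite_valid:
  assumes "finite V" "finite E"
  shows "finite {S. valid_state V E ends S}"
proof -
  have fc: "finite (comps V ends s)" for s
    unfolding comps_def quotient_def using assms by auto
  have "{S. valid_state V E ends S} \<subseteq> (\<lambda>(s,X). (s, \<lambda>K. K \<in> X)) ` (SIGMA s:Pow E. Pow (comps V ends s))"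
  proof
    fix S assume "S \<in> {S. valid_state V E ends S}"
    then obtain s c where S: "S = (s,c)" "s \<subseteq> E" "\<forall>K. K \<notin> comps V ends s \<longrightarrow> c K = False"
      unfolding valid_state_def by (cases S) auto
    then have "(s, {K. c K}) \<in> (SIGMA s:Pow E. Pow (comps V ends s))" by auto
    moreover have "S = (\<lambda>(s,X). (s, \<lambda>K. K \<in> X)) (s, {K. c K})" using S by auto
    ultimately show "S \<in> (\<lambda>(s,X). (s, \<lambda>K. K \<in> X)) ` (SIGMA s:Pow E. Pow (comps V ends s))" by blast
  qed
  moreover have "finite (SIGMA s:Pow E. Pow (comps V ends s))"
    using assms fc by auto
  ultimately show ?thesis by (meson finite_imageI finite_subset)
qed

lemma dcoef_L2:
  assumes loop: "fst (ends l) = snd (ends l)" and "l \<in> E" "finite E" "l \<notin> s" "l \<notin> t"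
  shows "dcoef E ends r (s, c) (insert l t, c') = (if (s, c) = (t, c') then sgn_exp r s l else 0)"
proof -
  have lE: "l \<in> E - s" using assms by auto
  have z: "(\<Sum>e \<in> E - s - {l}. if add_edge ends (s,c) e = Some (insert l t, c') then sgn_exp r s e else 0) = 0"
  proof (rule sum.neutral, intro ballI)
    fix e assume e: "e \<in> E - s - {l}"
    have "add_edge ends (s,c) e \<noteq> Some (insert l t, c')"
    proof
      assume "add_edge ends (s,c) e = Some (insert l t, c')"
      from add_edge_fst[OF this] have "insert l t = insert e s" by simp
      then have "l \<in> insert e s" by (metis insertI1)
      then show False using e \<open>l \<notin> s\<close> by simp
    qed
    then show "(if add_edge ends (s,c) e = Some (insert l t, c') then sgn_exp r s e else 0) = 0" by simp
  qed
  have "dcoef E ends r (s, c) (insert l t, c') = (if add_edge ends (s,c) l = Some (insert l t, c') then sgn_exp r s l else 0)"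
    unfolding dcoef_def fst_conv using z assms by (simp add: sum.remove[OF _ lE])
  also have "\<dots> = (if (s, c) = (t, c') then sgn_exp r s l else 0)"
    using add_edge_loop[of ends l, OF loop] assms by (auto simp: insert_ident)
  finally show ?thesis .
qed

lemma dcoef_L3:
  assumes loop: "fst (ends l) = snd (ends l)" and "l \<in> E" "finite E" "l \<notin> s" "l \<in> t"
  shows "dcoef E ends r (s, c) (t, c') = (if (insert l s, c) = (t, c') then sgn_exp r s l else 0)"
proof -
  have lE: "l \<in> E - s" using assms by auto
  have z: "(\<Sum>e \<in> E - s - {l}. if add_edge ends (s,c) e = Some (t, c') then sgn_exp r s e else 0) = 0"
  proof (rule sum.neutral, intro ballI)
    fix e assume e: "e \<in> E - s - {l}"
    have "add_edge ends (s,c) e \<noteq> Some (t, c')"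
    proof
      assume "add_edge ends (s,c) e = Some (t, c')"
      from add_edge_fst[OF this] have "t = insert e s" by simp
      then show False using e assms by blast
    qed
    then show "(if add_edge ends (s,c) e = Some (t, c') then sgn_exp r s e else 0) = 0" by simp
  qed
  have "dcoef E ends r (s, c) (t, c') = (if add_edge ends (s,c) l = Some (t, c') then sgn_exp r s l else 0)"
    unfolding dcoef_def fst_conv using z assms by (simp add: sum.remove[OF _ lE])
  also have "\<dots> = (if (insert l s, c) = (t, c') then sgn_exp r s l else 0)"
    using add_edge_loop[of ends l, OF loop] assms by auto
  finally show ?thesis .
qed

lemma dcoef_L1:
  assumes loop: "fst (ends l) = snd (ends l)" and lE: "l \<in> E" and fE: "finite E" and inj: "inj_on r E"
    and sE: "s \<subseteq> E" and ls: "l \<notin> s" and lt: "l \<notin> t"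
  shows "sgn_exp r t l * dcoef E ends r (insert l s, c) (insert l t, c')
       = - (sgn_exp r s l * dcoef E ends r (s, c) (t, c'))"
proof -
  have fs: "finite s" using fE sE finite_subset by blast
  have lE': "l \<in> E - s" using lE ls by auto
  have D1: "dcoef E ends r (s, c) (t, c') = (\<Sum>e \<in> E - insert l s. if add_edge ends (s,c) e = Some (t, c') then sgn_exp r s e else 0)"
  proof -
    have "add_edge ends (s,c) l \<noteq> Some (t, c')"
      using add_edge_loop[of ends l, OF loop] lt by auto
    moreover have "E - insert l s = E - s - {l}" by blast
    ultimately show ?thesis unfolding dcoef_def fst_conv using fE
      by (simp add: sum.remove[OF _ lE'])
  qed
  have D2: "dcoef E ends r (insert l s, c) (insert l t, c') = (\<Sum>e \<in> E - insert l s. if add_edge ends (insert l s,c) e = Some (insert l t, c') then sgn_exp r (insert l s) e else 0)"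
    unfolding dcoef_def fst_conv by simp
  have pw: "sgn_exp r t l * (if add_edge ends (insert l s,c) e = Some (insert l t, c') then sgn_exp r (insert l s) e else 0)
     = - (sgn_exp r s l * (if add_edge ends (s,c) e = Some (t, c') then sgn_exp r s e else 0))"
    if e: "e \<in> E - insert l s" for e
  proof (cases "add_edge ends (s,c) e = Some (t, c')")
    case True
    have t: "t = insert e s" using add_edge_fst[OF True] by simp
    have A: "add_edge ends (insert l s,c) e = Some (insert l t, c')"
      using True add_edge_phi[of ends l s c e, OF loop] by simp
    have eE: "e \<in> E" "e \<noteq> l" using e by auto
    have "r e \<noteq> r l" using inj_onD[OF inj _ eE(1) lE] eE(2) by blast
    then have s1: "(if r e < r l then -1 else 1) * (if r l < r e then -1 else (1::int)) = -1" by auto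
    have "sgn_exp r t l * sgn_exp r (insert l s) e
        = ((if r e < r l then -1 else 1) * (if r l < r e then -1 else (1::int))) * (sgn_exp r s l * sgn_exp r s e)"
      unfolding t using sgn_insert[OF fs, of e r l] sgn_insert[OF fs ls, of r e] e by simp
    then show ?thesis using A True s1 by simp
  next
    case False
    have "add_edge ends (insert l s,c) e \<noteq> Some (insert l t, c')"
    proof
      assume a: "add_edge ends (insert l s,c) e = Some (insert l t, c')"
      then obtain X where X: "add_edge ends (s,c) e = Some X" "insert l (fst X) = insert l t" "snd X = c'"
        using add_edge_phi[of ends l s c e, OF loop] by auto
      have "fst X = insert e s" using add_edge_fst[OF X(1)] by simp
      then have "l \<notin> fst X" using e ls by auto
      then have "fst X = t" using X(2) lt by (metis insert_ident)
      then show False using X False by (metis prod.collapse)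
    qed
    then show ?thesis using False by simp
  qed
  show ?thesis unfolding D1 D2 sum_distrib_left sum_negf[symmetric]
    by (rule sum.cong[OF refl]) (rule pw)
qed

theorem mainTheorem6:
  fixes V :: "'v set" and E :: "'e set" and ends :: "'e \<Rightarrow> 'v \<times> 'v" and r :: "'e \<Rightarrow> nat"
  assumes "graph V E ends"
    and "inj_on r E"
    and "has_loop E ends"
  shows "\<forall>i. cohomology_vanishes V E ends r i"
proof
  fix i
  obtain l where lE: "l \<in> E" and loop: "fst (ends l) = snd (ends l)"
    using assms(3) unfolding has_loop_def by blast
  have fV: "finite V" and fE: "finite E" using assms(1) unfolding graph_def by auto
  define Vs where "Vs = {S. valid_state V E ends S}"
  define A where "A = {S \<in> Vs. l \<notin> fst S}"
  define \<phi> where "\<phi> = (\<lambda>S::('e,'v) state. (insert l (fst S), snd S))"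
  define D where "D = dcoef E ends r"
  have fVs: "finite Vs" unfolding Vs_def using finite_valid[OF fV fE] .
  have fA: "finite A" unfolding A_def using fVs by simp
  have validphi: "S \<in> A \<Longrightarrow> \<phi> S \<in> Vs" for S
    unfolding A_def Vs_def \<phi>_def using valid_phi[of ends l E V, OF loop lE] by (cases S) auto
  have Vs_split: "Vs = A \<union> \<phi> ` A"
  proof
    show "Vs \<subseteq> A \<union> \<phi> ` A"
    proof
      fix S assume S: "S \<in> Vs"
      show "S \<in> A \<union> \<phi> ` A"
      proof (cases "l \<in> fst S")
        case True
        obtain s c where Sc: "S = (s, c)" by (cases S)
        have "valid_state V E ends (insert l (s - {l}), c)" using S True Sc unfolding Vs_def by (simp add: insert_absorb)
        then have "valid_state V E ends (s - {l}, c)" using valid_phi[of ends l E V "s - {l}" c, OF loop lE] by simp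
        then have "(s - {l}, c) \<in> A" unfolding A_def Vs_def by simp
        moreover have "S = \<phi> (s - {l}, c)" using True Sc unfolding \<phi>_def by (simp add: insert_absorb)
        ultimately show ?thesis by blast
      qed (use S A_def in auto)
    qed
  next
    show "A \<union> \<phi> ` A \<subseteq> Vs" using validphi A_def by auto
  qed
  have disj: "A \<inter> \<phi> ` A = {}" unfolding A_def \<phi>_def by auto
  have injphi: "inj_on \<phi> A" unfolding inj_on_def A_def \<phi>_def
    by (auto simp: prod_eq_iff)
  show "cohomology_vanishes V E ends r i"
    unfolding cohomology_vanishes_def
  proof (intro ballI impI)
    fix f assume fc: "f \<in> cochains V E ends i" and df: "differential V E ends r f = (\<lambda>_. 0)"
    have fsupp: "f S \<noteq> 0 \<Longrightarrow> S \<in> Vs" for S using fc unfolding cochains_def Vs_def by (cases S) auto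
    define g where "g = (\<lambda>S. if l \<notin> fst S then sgn_exp r (fst S) l * f (\<phi> S) else 0)"
    have gc: "g \<in> cochains V E ends (i - 1)"
      unfolding cochains_def
    proof (intro CollectI allI impI)
      fix S assume gS: "g S \<noteq> 0"
      obtain s c where Sc: "S = (s, c)" by (cases S)
      have ls: "l \<notin> s" and fS: "f (insert l s, c) \<noteq> 0" using gS unfolding g_def Sc \<phi>_def by (auto split: if_splits)
      have v: "valid_state V E ends (insert l s, c)" and ci: "int (card (insert l s)) = i"
        using fc fS unfolding cochains_def by auto
      have v2: "valid_state V E ends (s, c)" using v valid_phi[of ends l E V s c, OF loop lE] by simp
      have "finite s" using v2 fE unfolding valid_state_def by (auto intro: finite_subset)
      then have "int (card s) = i - 1" using ci ls by simp
      then show "valid_state V E ends S \<and> int (card (fst S)) = i - 1" using v2 Sc by simp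
    qed
    have dg: "differential V E ends r g = f"
    proof
      fix T :: "('e, 'v) state"
      obtain t c' where Tc: "T = (t, c')" by (cases T)
      have step1: "differential V E ends r g T = (\<Sum>S\<in>A. sgn_exp r (fst S) l * f (\<phi> S) * D S T)"
      proof -
        have "differential V E ends r g T = (\<Sum>S\<in>Vs. if l \<notin> fst S then sgn_exp r (fst S) l * f (\<phi> S) * D S T else 0)"
          unfolding differential_def Vs_def[symmetric] D_def g_def by (rule sum.cong) auto
        also have "\<dots> = (\<Sum>S\<in>A. sgn_exp r (fst S) l * f (\<phi> S) * D S T)"
          unfolding A_def using fVs by (simp add: sum.inter_filter)
        finally show ?thesis .
      qed
      show "differential V E ends r g T = f T"
      proof (cases "l \<in> t")
        case True
        have "(\<Sum>S\<in>A. sgn_exp r (fst S) l * f (\<phi> S) * D S T) = (\<Sum>S\<in>A. if \<phi> S = T then f T else 0)"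
        proof (rule sum.cong[OF refl])
          fix S assume SA: "S \<in> A"
          obtain s c where Sc: "S = (s, c)" by (cases S)
          have ls: "l \<notin> s" using SA Sc A_def by auto
          have "D S T = (if \<phi> S = T then sgn_exp r s l else 0)"
            unfolding D_def Sc Tc \<phi>_def using dcoef_L3[of ends l E s t r c c', OF loop lE fE ls True] by simp
          then show "sgn_exp r (fst S) l * f (\<phi> S) * D S T = (if \<phi> S = T then f T else 0)"
            using Sc sgn_sq[of r s l] by (auto simp: algebra_simps)
        qed
        also have "\<dots> = f T"
        proof (cases "T \<in> Vs")
          case True
          have "T \<notin> A" using \<open>l \<in> t\<close> Tc unfolding A_def by auto
          then obtain S0 where S0: "S0 \<in> A" "T = \<phi> S0" using True Vs_split by blast
          have "(\<Sum>S\<in>A. if \<phi> S = T then f T else 0) = (\<Sum>S\<in>A. if S = S0 then f T else 0)"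
          proof (rule sum.cong[OF refl])
            fix S assume "S \<in> A"
            then have "(\<phi> S = T) = (S = S0)" using S0 inj_on_eq_iff[OF injphi] by metis
            then show "(if \<phi> S = T then f T else 0) = (if S = S0 then f T else 0)" by simp
          qed
          also have "\<dots> = f T" using S0 fA by simp
          finally show ?thesis .
        next
          case False
          then have fT: "f T = 0" using fsupp by blast
          show ?thesis unfolding fT by (intro sum.neutral) simp
        qed
        finally show ?thesis using step1 by simp
      next
        case False
        have "0 = differential V E ends r f (\<phi> T)" using df by simp
        also have "\<dots> = (\<Sum>S\<in>Vs. f S * D S (\<phi> T))"
          unfolding differential_def Vs_def D_def ..
        also have "\<dots> = (\<Sum>S\<in>A. f S * D S (\<phi> T)) + (\<Sum>S\<in>A. f (\<phi> S) * D (\<phi> S) (\<phi> T))"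
          unfolding Vs_split using fA disj injphi by (simp add: sum.union_disjoint sum.reindex)
        finally have eq0: "0 = (\<Sum>S\<in>A. f S * D S (\<phi> T)) + (\<Sum>S\<in>A. f (\<phi> S) * D (\<phi> S) (\<phi> T))" .
        have p1: "(\<Sum>S\<in>A. f S * D S (\<phi> T)) = f T * sgn_exp r t l"
        proof -
          have "(\<Sum>S\<in>A. f S * D S (\<phi> T)) = (\<Sum>S\<in>A. if S = T then f T * sgn_exp r t l else 0)"
          proof (rule sum.cong[OF refl])
            fix S assume SA: "S \<in> A"
            obtain s c where Sc: "S = (s, c)" by (cases S)
            have ls: "l \<notin> s" using SA Sc A_def by auto
            show "f S * D S (\<phi> T) = (if S = T then f T * sgn_exp r t l else 0)"
              unfolding D_def Sc Tc \<phi>_def using dcoef_L2[of ends l E s t r c c', OF loop lE fE ls False] by auto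
          qed
          also have "\<dots> = f T * sgn_exp r t l"
          proof (cases "T \<in> A")
            case True then show ?thesis using fA by simp
          next
            case False
            then have fT: "f T = 0" using fsupp \<open>l \<notin> t\<close> Tc A_def by auto
            show ?thesis unfolding fT mult_zero_left if_cancel by simp
          qed
          finally show ?thesis .
        qed
        have p2: "sgn_exp r t l * (\<Sum>S\<in>A. f (\<phi> S) * D (\<phi> S) (\<phi> T))
                 = - (\<Sum>S\<in>A. sgn_exp r (fst S) l * f (\<phi> S) * D S T)"
          unfolding sum_distrib_left sum_negf[symmetric]
        proof (rule sum.cong[OF refl])
          fix S assume SA: "S \<in> A"
          obtain s c where Sc: "S = (s, c)" by (cases S)
          have ls: "l \<notin> s" using SA Sc A_def by auto
          have sE: "s \<subseteq> E" using SA Sc unfolding A_def Vs_def valid_state_def by auto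
          have h: "sgn_exp r t l * D (\<phi> S) (\<phi> T) = - (sgn_exp r s l * D S T)"
            unfolding D_def Sc Tc \<phi>_def using dcoef_L1[of ends l E r s t c c', OF loop lE fE assms(2) sE ls False] by simp
          have "sgn_exp r t l * (f (\<phi> S) * D (\<phi> S) (\<phi> T)) = f (\<phi> S) * (sgn_exp r t l * D (\<phi> S) (\<phi> T))"
            by (simp add: algebra_simps)
          also have "\<dots> = f (\<phi> S) * (- (sgn_exp r s l * D S T))" by (simp only: h)
          also have "\<dots> = - (sgn_exp r (fst S) l * f (\<phi> S) * D S T)" using Sc by (simp add: algebra_simps)
          finally show "sgn_exp r t l * (f (\<phi> S) * D (\<phi> S) (\<phi> T)) = - (sgn_exp r (fst S) l * f (\<phi> S) * D S T)" .
        qed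
        have e1: "sgn_exp r t l * (f T * sgn_exp r t l) = f T"
          using sgn_sq[of r t l] by (metis mult.commute mult.left_commute mult_1_right)
        have "0 = sgn_exp r t l * ((\<Sum>S\<in>A. f S * D S (\<phi> T)) + (\<Sum>S\<in>A. f (\<phi> S) * D (\<phi> S) (\<phi> T)))"
          by (simp only: eq0[symmetric] mult_zero_right)
        also have "\<dots> = sgn_exp r t l * (f T * sgn_exp r t l) + sgn_exp r t l * (\<Sum>S\<in>A. f (\<phi> S) * D (\<phi> S) (\<phi> T))"
          by (simp only: p1 distrib_left)
        also have "\<dots> = f T - differential V E ends r g T"
          by (simp only: e1 p2 step1 diff_conv_add_uminus)
        finally show ?thesis by simp
      qed
    qed
    show "\<exists>g\<in>cochains V E ends (i - 1). differential V E ends r g = f"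
      using gc dg by blast
  qed
qed

end
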